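(* For all $k\in\mathbb N$ and $\mu\in\{1,\dots,L\}$, $$f(v_{k,\mu})=-\frac{1}{2\|b\|^2}\langle v_{k,\mu},b\rangle=-\frac{1}{2\|b\|^2}\|v_{k,\mu}\|_A^2,$$ where $\|v\|_A=\sqrt{\langle Av,v\rangle}$.
   Context: Let $\mathcal V=\bigotimes_{\nu=1}^d\mathbb R^{m_\nu}\cong\mathbb R^N$ with the Euclidean inner product $\langle\cdot,\cdot\rangle$. Let $A\in\mathbb R^{N\times N}$ be symmetric positive definite, $b\in\mathcal V\setminus\{0\}$, $f(v)=\frac{1}{\|b\|^2}(\frac12\langle Av,v\rangle-\langle b,v\rangle)$. Let $L\ge d$, $P_1,\dots,P_L$ finite-dimensional real inner product spaces, $P=P_1\times\dots\times P_L$, $U:P\to\mathcal V$ multilinear. For $\mathbf p\in P$, $W_{\mu,\mathbf p^{[\mu]}}:P_\mu\to\mathcal V$ is $q\mapsto U(p_1,\dots,p_{\mu-1},q,p_{\mu+1},\dots,p_L)$; $X^T$ transpose, $X^+$ pseudoinverse. ALS: choose $\mathbf p_1=(p_1^1,\dots,p_L^1)\in P$; for $k=1,2,\dots$ and $\mu=1,\dots,L$ in order, $W_{k,\mu}:=W_{\mu,(p_1^{k+1},\dots,p_{\mu-1}^{k+1},p_{\mu+1}^k,\dots,p_L^k)}$ and $p_\mu^{k+1}:=(W_{k,\mu}^TAW_{k,\mu})^+W_{k,\mu}^Tb$. For $\mu\in\{0,\dots,L\}$ put $v_{k,\mu}=U(p_1^{k+1},\dots,p_\mu^{k+1},p_{\mu+1}^k,\dots,p_L^k)$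 (the iterate after the first $\mu$ updates of sweep $k$). *)

theory Defs
  imports Complex_Main "Jordan_Normal_Form.Matrix"
begin

text \<open>Vectors of V = R^N and of the parameter spaces P_mu = R^(n mu) are
  Jordan_Normal_Form vectors (real vec) with the standard (Euclidean) inner product.
  A parameter tuple p = (p_1,...,p_L) is a list of length L; the paper's index mu in
  1..L corresponds to the list position mu - 1.\<close>

definition is_param :: "nat \<Rightarrow> (nat \<Rightarrow> nat) \<Rightarrow> real vec list \<Rightarrow> bool" where
  "is_param L n ps \<longleftrightarrow> length ps = L \<and> (\<forall>i<L. ps ! i \<in> carrier_vec (n i))"

definition multilinear_map ::
  "nat \<Rightarrow> (nat \<Rightarrow> nat) \<Rightarrow> nat \<Rightarrow> (real vec list \<Rightarrow> real vec) \<Rightarrow> bool" where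
  "multilinear_map L n N U \<longleftrightarrow>
     (\<forall>ps. is_param L n ps \<longrightarrow> U ps \<in> carrier_vec N) \<and>
     (\<forall>ps i x y a. is_param L n ps \<longrightarrow> i < L \<longrightarrow> x \<in> carrier_vec (n i) \<longrightarrow> y \<in> carrier_vec (n i) \<longrightarrow>
        U (ps[i := a \<cdot>\<^sub>v x + y]) = a \<cdot>\<^sub>v U (ps[i := x]) + U (ps[i := y]))"

text \<open>Matrix of the linear map W_{mu,p^[mu]} : q \<mapsto> U(p_1,..,q,..,p_L) (slot i = mu - 1).\<close>
definition Wmat :: "(real vec list \<Rightarrow> real vec) \<Rightarrow> (nat \<Rightarrow> nat) \<Rightarrow> nat \<Rightarrow> real vec list \<Rightarrow> nat \<Rightarrow> real mat" where
  "Wmat U n N ps i = mat N (n i) (\<lambda>(r, c). U (ps[i := unit_vec (n i) c]) $ r)"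

definition pinv :: "real mat \<Rightarrow> real mat" where
  "pinv M = (THE X. X \<in> carrier_mat (dim_col M) (dim_row M) \<and> M * X * M = M \<and> X * M * X = X \<and>
                    transpose_mat (M * X) = M * X \<and> transpose_mat (X * M) = X * M)"

definition als_update :: "(real vec list \<Rightarrow> real vec) \<Rightarrow> (nat \<Rightarrow> nat) \<Rightarrow> nat \<Rightarrow> real mat \<Rightarrow> real vec
     \<Rightarrow> real vec list \<Rightarrow> nat \<Rightarrow> real vec list" where
  "als_update U n N A b ps i =
     (let W = Wmat U n N ps i in ps[i := pinv (transpose_mat W * A * W) *\<^sub>v (transpose_mat W *\<^sub>v b)])"

fun partial_sweep :: "(real vec list \<Rightarrow> real vec) \<Rightarrow> (nat \<Rightarrow> nat) \<Rightarrow> nat \<Rightarrow> real mat \<Rightarrow> real vec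
     \<Rightarrow> real vec list \<Rightarrow> nat \<Rightarrow> real vec list" where
  "partial_sweep U n N A b ps 0 = ps"
| "partial_sweep U n N A b ps (Suc m) = als_update U n N A b (partial_sweep U n N A b ps m) m"

text \<open>als_param ... p1 k = p^k (the tuple at the start of sweep k), for k \<ge> 1; p^1 = p1.\<close>
definition als_param :: "nat \<Rightarrow> (real vec list \<Rightarrow> real vec) \<Rightarrow> (nat \<Rightarrow> nat) \<Rightarrow> nat \<Rightarrow> real mat \<Rightarrow> real vec
     \<Rightarrow> real vec list \<Rightarrow> nat \<Rightarrow> real vec list" where
  "als_param L U n N A b p1 k = ((\<lambda>ps. partial_sweep U n N A b ps L) ^^ (k - 1)) p1"

definition als_iterate :: "nat \<Rightarrow> (real vec list \<Rightarrow> real vec) \<Rightarrow> (nat \<Rightarrow> nat) \<Rightarrow> nat \<Rightarrow> real mat \<Rightarrow> real vec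
     \<Rightarrow> real vec list \<Rightarrow> nat \<Rightarrow> nat \<Rightarrow> real vec" where
  "als_iterate L U n N A b p1 k \<mu> = U (partial_sweep U n N A b (als_param L U n N A b p1 k) \<mu>)"

definition energy :: "real mat \<Rightarrow> real vec \<Rightarrow> real vec \<Rightarrow> real" where
  "energy A b v = (1 / (b \<bullet> b)) * ((1/2) * ((A *\<^sub>v v) \<bullet> v) - b \<bullet> v)"

definition A_norm :: "real mat \<Rightarrow> real vec \<Rightarrow> real" where
  "A_norm A v = sqrt ((A *\<^sub>v v) \<bullet> v)"

end

theory Submission
  imports Defs
begin


definition mp4 :: "real mat \<Rightarrow> real mat \<Rightarrow> bool" where
 "mp4 M X \<longleftrightarrow> X \<in> carrier_mat (dim_col M) (dim_row M) \<and> M * X * M = M \<and> X * M * X = X \<and>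
                    transpose_mat (M * X) = M * X \<and> transpose_mat (X * M) = X * M"

lemma mp4_unique:
  assumes M: "M \<in> carrier_mat n m" and X: "mp4 M X" and Y: "mp4 M Y"
  shows "X = Y"
proof -
  have Xc: "X \<in> carrier_mat m n" and Yc: "Y \<in> carrier_mat m n" using X Y M unfolding mp4_def by auto
  note c = M Xc Yc
  have x1: "M * X * M = M" and x2: "X * M * X = X" and x3: "(M * X)\<^sup>T = M * X" and x4: "(X * M)\<^sup>T = X * M"
    using X unfolding mp4_def by auto
  have y1: "M * Y * M = M" and y2: "Y * M * Y = Y" and y3: "(M * Y)\<^sup>T = M * Y" and y4: "(Y * M)\<^sup>T = Y * M"
    using Y unfolding mp4_def by auto
  have MT: "M\<^sup>T \<in> carrier_mat m n" "X\<^sup>T \<in> carrier_mat n m" "Y\<^sup>T \<in> carrier_mat n m" using c by auto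
  have tMX: "(M * X)\<^sup>T = X\<^sup>T * M\<^sup>T" and tMY: "(M * Y)\<^sup>T = Y\<^sup>T * M\<^sup>T"
     and tXM: "(X * M)\<^sup>T = M\<^sup>T * X\<^sup>T" and tYM: "(Y * M)\<^sup>T = M\<^sup>T * Y\<^sup>T"
    using transpose_mult c by blast+
  have tMYM: "(M * Y * M)\<^sup>T = M\<^sup>T * (Y\<^sup>T * M\<^sup>T)"
    using transpose_mult[of "M*Y" n n M m] c tMY by auto
  have tMXM: "(M * X * M)\<^sup>T = M\<^sup>T * (X\<^sup>T * M\<^sup>T)"
    using transpose_mult[of "M*X" n n M m] c tMX by auto
  have a: "X\<^sup>T * M\<^sup>T = M * Y"
  proof -
    have "X\<^sup>T * M\<^sup>T = X\<^sup>T * (M\<^sup>T * (Y\<^sup>T * M\<^sup>T))" using y1 tMYM by simp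
    also have "\<dots> = (X\<^sup>T * M\<^sup>T) * (Y\<^sup>T * M\<^sup>T)" by (rule assoc_mult_mat[of "X\<^sup>T" n m "M\<^sup>T" n "Y\<^sup>T * M\<^sup>T" n, symmetric]) (use MT in auto)
    also have "\<dots> = (M * X) * (M * Y)" using x3 y3 tMX tMY by simp
    also have "\<dots> = (M * X * M) * Y" using assoc_mult_mat[of "M * X" n n M m Y n] c by simp
    finally show ?thesis using x1 by simp
  qed
  have b: "M\<^sup>T * Y\<^sup>T = X * M"
  proof -
    have "M\<^sup>T * Y\<^sup>T = (M\<^sup>T * (X\<^sup>T * M\<^sup>T)) * Y\<^sup>T" using x1 tMXM by simp
    also have "M\<^sup>T * (X\<^sup>T * M\<^sup>T) = (M\<^sup>T * X\<^sup>T) * M\<^sup>T" by (rule assoc_mult_mat[of "M\<^sup>T" m n "X\<^sup>T" m "M\<^sup>T" n, symmetric]) (use MT in auto)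
    also have "(M\<^sup>T * X\<^sup>T) * M\<^sup>T * Y\<^sup>T = (M\<^sup>T * X\<^sup>T) * (M\<^sup>T * Y\<^sup>T)" by (rule assoc_mult_mat[of "M\<^sup>T * X\<^sup>T" m m "M\<^sup>T" n "Y\<^sup>T" m]) (use MT in auto)
    also have "\<dots> = (X * M) * (Y * M)" using x4 y4 tXM tYM by simp
    also have "\<dots> = X * (M * (Y * M))" by (rule assoc_mult_mat[of X m n M m "Y * M" m]) (use c in auto)
    also have "M * (Y * M) = M * Y * M" by (rule assoc_mult_mat[of M n m Y n M m, symmetric]) (use c in auto)
    finally show ?thesis using y1 by simp
  qed
  have "X = X * (M * X)" using x2 c by simp
  also have "\<dots> = X * (X\<^sup>T * M\<^sup>T)" using x3 tMX by simp
  also have "\<dots> = X * M * Y" using a c by simp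
  finally have X': "X = X * M * Y" .
  have "Y = (Y * M) * Y" using y2 by simp
  also have "\<dots> = (M\<^sup>T * Y\<^sup>T) * Y" using y4 tYM by simp
  also have "\<dots> = X * M * Y" using b by simp
  finally show ?thesis using X' by simp
qed

lemma pinv_mp4: assumes M: "M \<in> carrier_mat n m" and ex: "\<exists>X. mp4 M X"
  shows "mp4 M (pinv M)"
proof -
  obtain X where X: "mp4 M X" using ex by blast
  have "mp4 M (THE X. mp4 M X)"
    by (rule theI[of "mp4 M" X], rule X, rule mp4_unique[OF M], assumption, rule X)
  thus ?thesis unfolding pinv_def mp4_def[symmetric] .
qed



definition outer :: "real vec \<Rightarrow> real vec \<Rightarrow> real mat" where
  "outer u v = mat (dim_vec u) (dim_vec v) (\<lambda>(i,j). u$i * v$j)"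

lemma outer_carrier[simp]: "outer u v \<in> carrier_mat (dim_vec u) (dim_vec v)"
  unfolding outer_def by auto

lemma outer_mult_vec: assumes "dim_vec w = dim_vec v" shows "outer u v *\<^sub>v w = (v \<bullet> w) \<cdot>\<^sub>v u"
proof (rule eq_vecI)
  fix i assume "i < dim_vec ((v \<bullet> w) \<cdot>\<^sub>v u)"
  then have i: "i < dim_vec u" by simp
  have "(outer u v *\<^sub>v w) $ i = (\<Sum>j<dim_vec v. u$i * v$j * w$j)"
    using i assms unfolding outer_def mult_mat_vec_def scalar_prod_def row_def
    by (auto simp: atLeast0LessThan)
  also have "\<dots> = u$i * (v \<bullet> w)" unfolding scalar_prod_def using assms
    by (simp add: sum_distrib_left atLeast0LessThan mult.assoc)
  finally show "(outer u v *\<^sub>v w) $ i = ((v \<bullet> w) \<cdot>\<^sub>v u) $ i" using i by simp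
qed (auto simp: outer_def)

lemma smult_mat_vec: assumes "dim_vec x = dim_col A" shows "(a \<cdot>\<^sub>m A) *\<^sub>v x = a \<cdot>\<^sub>v (A *\<^sub>v x)"
  by (rule eq_vecI) (use assms in \<open>auto simp: mult_mat_vec_def scalar_prod_def sum_distrib_left mult.assoc intro!: sum.cong\<close>)

lemma col_unit: fixes M :: "real mat" assumes "M \<in> carrier_mat nr nc" "k < nc" shows "M *\<^sub>v unit_vec nc k = col M k"
  by (rule eq_vecI) (use assms in auto)

lemma vec_eq_by_dot: fixes x :: "real vec" assumes "x \<in> carrier_vec n" "y \<in> carrier_vec n"
  and "\<And>z. z \<in> carrier_vec n \<Longrightarrow> x \<bullet> z = y \<bullet> z" shows "x = y"
proof (rule eq_vecI)
  fix i assume "i < dim_vec y" then have i: "i < n" using assms by auto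
  show "x $ i = y $ i" using assms(3)[of "unit_vec n i"] i by simp
qed (use assms in auto)

lemma mat_eq_by_vec: fixes A :: "real mat" assumes A: "A \<in> carrier_mat nr nc" and B: "B \<in> carrier_mat nr nc"
  and "\<And>x. x \<in> carrier_vec nc \<Longrightarrow> A *\<^sub>v x = B *\<^sub>v x" shows "A = B"
proof (rule mat_col_eqI)
  fix i assume "i < dim_col B" then have i: "i < nc" using B by auto
  show "col A i = col B i" using assms(3)[of "unit_vec nc i"] col_unit[OF A i] col_unit[OF B i] by simp
qed (use A B in auto)

lemma sym_transpose: fixes P :: "real mat" assumes P: "P \<in> carrier_mat n n"
  and s: "\<And>x y. x \<in> carrier_vec n \<Longrightarrow> y \<in> carrier_vec n \<Longrightarrow> (P *\<^sub>v x) \<bullet> y = x \<bullet> (P *\<^sub>v y)"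
  shows "P\<^sup>T = P"
proof (rule mat_eq_by_vec[of _ n n])
  fix x :: "real vec" assume x: "x \<in> carrier_vec n"
  show "P\<^sup>T *\<^sub>v x = P *\<^sub>v x"
  proof (rule vec_eq_by_dot[of _ n])
    fix z :: "real vec" assume z: "z \<in> carrier_vec n"
    have "(P\<^sup>T *\<^sub>v x) \<bullet> z = x \<bullet> (P *\<^sub>v z)" using transpose_vec_mult_scalar[OF P z x] .
    also have "\<dots> = (P *\<^sub>v z) \<bullet> x" using comm_scalar_prod[of x n "P *\<^sub>v z"] x z P by auto
    also have "\<dots> = z \<bullet> (P *\<^sub>v x)" using s[OF z x] .
    also have "\<dots> = (P *\<^sub>v x) \<bullet> z" using comm_scalar_prod[of z n "P *\<^sub>v x"] x z P by auto
    finally show "(P\<^sup>T *\<^sub>v x) \<bullet> z = (P *\<^sub>v x) \<bullet> z" .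
  qed (use x P in auto)
qed (use P in auto)



lemma dot_self_pos: fixes u :: "real vec" assumes u: "u \<in> carrier_vec n" "u \<noteq> 0\<^sub>v n"
  shows "u \<bullet> u > 0"
proof -
  obtain i where i: "i < n" "u $ i \<noteq> 0" using u by (metis carrier_vecD eq_vecI index_zero_vec(1) index_zero_vec(2))
  have "u \<bullet> u = (\<Sum>j\<in>{0..<n}. u$j * u$j)" unfolding scalar_prod_def using u by simp
  also have "\<dots> > 0" by (rule sum_pos2[of _ i]) (use i in \<open>auto simp: zero_less_mult_iff\<close>)
  finally show ?thesis .
qed

lemma zero_mat_vec[simp]: "x \<in> carrier_vec nr \<Longrightarrow> (0\<^sub>m nc nr :: real mat) *\<^sub>v x = 0\<^sub>v nc"
  by (rule eq_vecI) (auto simp: scalar_prod_def)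

lemma mat_vec_zero[simp]: "(M :: real mat) \<in> carrier_mat nr nc \<Longrightarrow> M *\<^sub>v 0\<^sub>v nc = 0\<^sub>v nr"
  by (rule eq_vecI) (auto simp: scalar_prod_def)

lemma vec_sub_add: "(x::real vec) \<in> carrier_vec n \<Longrightarrow> y \<in> carrier_vec n \<Longrightarrow> x = (x - y) + y"
  by (intro eq_vecI) auto

lemma vec_sub_add2: "(x::real vec) \<in> carrier_vec n \<Longrightarrow> y \<in> carrier_vec n \<Longrightarrow> y + (x - y) = x"
  by (intro eq_vecI) auto

lemma vec_add_smult_zero[simp]: "(x::real vec) \<in> carrier_vec n \<Longrightarrow> x + a \<cdot>\<^sub>v 0\<^sub>v n = x"
  by (intro eq_vecI) auto

lemma vec_add_zero_smult[simp]: "(x::real vec) \<in> carrier_vec n \<Longrightarrow> u \<in> carrier_vec n \<Longrightarrow> x + 0 \<cdot>\<^sub>v u = x"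
  by (intro eq_vecI) auto

lemma ex13:
  fixes M :: "real mat" assumes M: "M \<in> carrier_mat nr nc"
  shows "k \<le> nc \<Longrightarrow> \<exists>X\<in>carrier_mat nc nr.
     (\<forall>x\<in>carrier_vec nr. \<forall>y\<in>carrier_vec nr. (M *\<^sub>v (X *\<^sub>v x)) \<bullet> y = x \<bullet> (M *\<^sub>v (X *\<^sub>v y))) \<and>
     (\<forall>x\<in>carrier_vec nr. M *\<^sub>v (X *\<^sub>v (M *\<^sub>v (X *\<^sub>v x))) = M *\<^sub>v (X *\<^sub>v x)) \<and>
     (\<forall>j<k. M *\<^sub>v (X *\<^sub>v col M j) = col M j)"
proof (induction k)
  case 0
  show ?case
  proof (rule bexI[of _ "0\<^sub>m nc nr"], intro conjI ballI allI impI)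
    fix x y :: "real vec" assume x: "x \<in> carrier_vec nr" and y: "y \<in> carrier_vec nr"
    have z: "M *\<^sub>v (0\<^sub>m nc nr *\<^sub>v x) = 0\<^sub>v nr" using M x by auto
    show "(M *\<^sub>v (0\<^sub>m nc nr *\<^sub>v x)) \<bullet> y = x \<bullet> (M *\<^sub>v (0\<^sub>m nc nr *\<^sub>v y))"
      using M x y by auto
    show "M *\<^sub>v (0\<^sub>m nc nr *\<^sub>v (M *\<^sub>v (0\<^sub>m nc nr *\<^sub>v x))) = M *\<^sub>v (0\<^sub>m nc nr *\<^sub>v x)"
      using M x by auto
  qed auto
next
  case (Suc k)
  then have k: "k < nc" by auto
  from Suc obtain X where X: "X \<in> carrier_mat nc nr"
    and sy: "\<And>x y. x\<in>carrier_vec nr \<Longrightarrow> y\<in>carrier_vec nr \<Longrightarrow> (M *\<^sub>v (X *\<^sub>v x)) \<bullet> y = x \<bullet> (M *\<^sub>v (X *\<^sub>v y))"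
    and id: "\<And>x. x\<in>carrier_vec nr \<Longrightarrow> M *\<^sub>v (X *\<^sub>v (M *\<^sub>v (X *\<^sub>v x))) = M *\<^sub>v (X *\<^sub>v x)"
    and cl: "\<And>j. j<k \<Longrightarrow> M *\<^sub>v (X *\<^sub>v col M j) = col M j"
    by auto
  define p where "p x = M *\<^sub>v (X *\<^sub>v x)" for x
  have pc[simp]: "p x \<in> carrier_vec nr" for x unfolding p_def carrier_vec_def using M by auto
  have p_add: "p (x + y) = p x + p y" if "x \<in> carrier_vec nr" "y \<in> carrier_vec nr" for x y
    unfolding p_def using that X M by (simp add: mult_add_distrib_mat_vec[of _ nc nr] mult_add_distrib_mat_vec[of _ nr nc])
  have p_minus: "p (x - y) = p x - p y" if "x \<in> carrier_vec nr" "y \<in> carrier_vec nr" for x y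
    unfolding p_def using that X M by (simp add: mult_minus_distrib_mat_vec[of _ nc nr] mult_minus_distrib_mat_vec[of _ nr nc])
  have p_smult: "p (a \<cdot>\<^sub>v x) = a \<cdot>\<^sub>v p x" if "x \<in> carrier_vec nr" for x a
    unfolding p_def using that X M by (simp add: mult_mat_vec[of _ nc nr] mult_mat_vec[of _ nr nc])
  have sy': "(p x) \<bullet> y = x \<bullet> p y" if "x\<in>carrier_vec nr" "y\<in>carrier_vec nr" for x y
    using sy that unfolding p_def by auto
  have id': "p (p x) = p x" if "x\<in>carrier_vec nr" for x using id that unfolding p_def by auto
  define c where "c = col M k"
  have c: "c \<in> carrier_vec nr" unfolding c_def using M by auto
  define u where "u = c - p c"
  have u: "u \<in> carrier_vec nr" unfolding u_def using c by auto
  show ?case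
  proof (cases "u = 0\<^sub>v nr")
    case True
    have "p c = c"
    proof -
      have "c = u + p c" unfolding u_def using c vec_sub_add[OF c pc] by auto
      thus ?thesis using True c by auto
    qed
    then have pk: "M *\<^sub>v (X *\<^sub>v col M k) = col M k" unfolding p_def c_def .
    show ?thesis
      by (rule bexI[OF _ X]) (use sy id cl pk in \<open>auto simp: less_Suc_eq\<close>)
  next
    case False
    have uu: "u \<bullet> u > 0" using dot_self_pos[OF u False] .
    define \<alpha> where "\<alpha> = 1 / (u \<bullet> u)"
    have \<alpha>uu: "\<alpha> * (u \<bullet> u) = 1" unfolding \<alpha>_def using uu by simp
    define e where "e = unit_vec nc k - X *\<^sub>v c"
    have e: "e \<in> carrier_vec nc" unfolding e_def using X c by auto
    have Me: "M *\<^sub>v e = u"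
      unfolding e_def u_def p_def c_def
      using M X col_unit[OF M k] mult_minus_distrib_mat_vec[OF M, of "unit_vec nc k" "X *\<^sub>v col M k"] by auto
    define X' where "X' = X + \<alpha> \<cdot>\<^sub>m outer e u"
    have oc: "outer e u \<in> carrier_mat nc nr" using outer_carrier[of e u] e u by auto
    have X': "X' \<in> carrier_mat nc nr" unfolding X'_def using X oc by auto
    have X'x: "X' *\<^sub>v x = X *\<^sub>v x + (\<alpha> * (u \<bullet> x)) \<cdot>\<^sub>v e" if x: "x \<in> carrier_vec nr" for x
    proof -
      have "X' *\<^sub>v x = X *\<^sub>v x + (\<alpha> \<cdot>\<^sub>m outer e u) *\<^sub>v x"
        unfolding X'_def using add_mult_distrib_mat_vec[OF X _ x, of "\<alpha> \<cdot>\<^sub>m outer e u"] oc by auto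
      also have "(\<alpha> \<cdot>\<^sub>m outer e u) *\<^sub>v x = \<alpha> \<cdot>\<^sub>v ((u \<bullet> x) \<cdot>\<^sub>v e)"
        using smult_mat_vec[of x "outer e u" \<alpha>] outer_mult_vec[of x u e] x u oc by auto
      finally show ?thesis by (simp add: smult_smult_assoc)
    qed
    define p' where "p' x = M *\<^sub>v (X' *\<^sub>v x)" for x
    have p'x: "p' x = p x + (\<alpha> * (u \<bullet> x)) \<cdot>\<^sub>v u" if x: "x \<in> carrier_vec nr" for x
      unfolding p'_def X'x[OF x] p_def using M X x e Me
      by (simp add: mult_add_distrib_mat_vec[of _ nr nc] mult_mat_vec[of _ nr nc])
    have pu: "p u = 0\<^sub>v nr" unfolding u_def using p_minus[OF c pc] id'[OF c] by auto
    have upx: "u \<bullet> p x = 0" if x: "x \<in> carrier_vec nr" for x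
      using sy'[OF u x] pu x by auto
    show ?thesis
    proof (rule bexI[OF _ X'], intro conjI ballI allI impI)
      fix x y :: "real vec" assume x: "x \<in> carrier_vec nr" and y: "y \<in> carrier_vec nr"
      have "p' x \<bullet> y = p x \<bullet> y + \<alpha> * (u \<bullet> x) * (u \<bullet> y)"
        using p'x[OF x] x y u by (simp add: add_scalar_prod_distrib[of _ nr])
      also have "\<dots> = x \<bullet> p y + \<alpha> * (u \<bullet> y) * (x \<bullet> u)"
        using sy'[OF x y] comm_scalar_prod[OF u x] by simp
      also have "\<dots> = x \<bullet> p' y"
        using p'x[OF y] x y u by (simp add: scalar_prod_add_distrib[of _ nr])
      finally show "(M *\<^sub>v (X' *\<^sub>v x)) \<bullet> y = x \<bullet> (M *\<^sub>v (X' *\<^sub>v y))" unfolding p'_def .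
    next
      fix x :: "real vec" assume x: "x \<in> carrier_vec nr"
      define \<beta> where "\<beta> = \<alpha> * (u \<bullet> x)"
      have p'xc: "p' x \<in> carrier_vec nr" using p'x[OF x] u by simp
      have "p (p' x) = p x" using p'x[OF x] p_add[OF pc, of "\<beta> \<cdot>\<^sub>v u"] u p_smult[OF u] pu id'[OF x]
        unfolding \<beta>_def by auto
      moreover have "u \<bullet> p' x = \<beta> * (u \<bullet> u)"
        using p'x[OF x] u upx[OF x] unfolding \<beta>_def by (simp add: scalar_prod_add_distrib[of _ nr])
      ultimately have "p' (p' x) = p x + (\<alpha> * (\<beta> * (u \<bullet> u))) \<cdot>\<^sub>v u" using p'x[OF p'xc] by simp
      also have "\<alpha> * (\<beta> * (u \<bullet> u)) = \<beta>" using \<alpha>uu by (metis mult.commute mult.left_commute mult_1_right)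
      finally have "p' (p' x) = p' x" using p'x[OF x] unfolding \<beta>_def by simp
      moreover have "X' *\<^sub>v x \<in> carrier_vec nc" using X' x by auto
      ultimately show "M *\<^sub>v (X' *\<^sub>v (M *\<^sub>v (X' *\<^sub>v x))) = M *\<^sub>v (X' *\<^sub>v x)" unfolding p'_def by simp
    next
      fix j assume j: "j < Suc k"
      have cj: "col M j \<in> carrier_vec nr" using M by auto
      show "M *\<^sub>v (X' *\<^sub>v col M j) = col M j"
      proof (cases "j < k")
        case True
        have pcj: "p (col M j) = col M j" using cl[OF True] unfolding p_def .
        have "u \<bullet> col M j = c \<bullet> col M j - p c \<bullet> col M j"
          unfolding u_def using c cj by (simp add: minus_scalar_prod_distrib[of _ nr])
        also have "p c \<bullet> col M j = c \<bullet> col M j" using sy'[OF c cj] pcj by simp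
        finally have "u \<bullet> col M j = 0" by simp
        then show ?thesis using p'x[OF cj] pcj cj u unfolding p'_def by simp
      next
        case False
        then have jk: "j = k" using j by auto
        have cu: "c = u + p c" unfolding u_def using c vec_sub_add[OF c pc] by auto
        have "u \<bullet> c = u \<bullet> u + u \<bullet> p c" using cu u c scalar_prod_add_distrib[OF u u pc] by metis
        then have "u \<bullet> c = u \<bullet> u" using upx[OF c] by simp
        then have "p' c = p c + u" using p'x[OF c] \<alpha>uu by simp
        also have "\<dots> = c" unfolding u_def by (rule vec_sub_add2[OF c pc])
        finally show ?thesis unfolding p'_def jk c_def .
      qed
    qed
  qed
qed



lemma tr3: fixes A B C :: "real mat"
  assumes "A \<in> carrier_mat n n" "B \<in> carrier_mat n n" "C \<in> carrier_mat n n"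
  shows "(A * B * C)\<^sup>T = C\<^sup>T * (B\<^sup>T * A\<^sup>T)"
proof -
  have "(A * B * C)\<^sup>T = C\<^sup>T * (A * B)\<^sup>T" using transpose_mult[of "A*B" n n C n] assms by auto
  also have "(A * B)\<^sup>T = B\<^sup>T * A\<^sup>T" using transpose_mult assms by blast
  finally show ?thesis .
qed

lemma mp4_exists_sym:
  fixes M :: "real mat" assumes M: "M \<in> carrier_mat n n" and S: "M\<^sup>T = M"
  shows "\<exists>Z. mp4 M Z"
proof -
  obtain X where X: "X \<in> carrier_mat n n"
    and sy: "\<And>x y. x\<in>carrier_vec n \<Longrightarrow> y\<in>carrier_vec n \<Longrightarrow> (M *\<^sub>v (X *\<^sub>v x)) \<bullet> y = x \<bullet> (M *\<^sub>v (X *\<^sub>v y))"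
    and cl: "\<And>j. j<n \<Longrightarrow> M *\<^sub>v (X *\<^sub>v col M j) = col M j"
    using ex13[OF M, of n] by auto
  have as: "\<And>A B C. A \<in> carrier_mat n n \<Longrightarrow> B \<in> carrier_mat n n \<Longrightarrow> C \<in> carrier_mat n n \<Longrightarrow> A * B * C = A * (B * C)"
    by (rule assoc_mult_mat)
  have XT: "X\<^sup>T \<in> carrier_mat n n" using X by auto
  have MX: "M * X \<in> carrier_mat n n" using M X by auto
  have XTM: "X\<^sup>T * M \<in> carrier_mat n n" using M X by auto
  have XM: "X * M \<in> carrier_mat n n" using M X by auto
  have P: "(M * X)\<^sup>T = M * X"
  proof (rule sym_transpose[OF MX])
    fix x y :: "real vec" assume "x \<in> carrier_vec n" "y \<in> carrier_vec n"
    then show "((M * X) *\<^sub>v x) \<bullet> y = x \<bullet> ((M * X) *\<^sub>v y)" using sy M X by auto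
  qed
  have MXM: "M * X * M = M"
  proof (rule mat_col_eqI)
    fix j assume "j < dim_col M" then have j: "j < n" using M by auto
    have "col (M * X * M) j = (M * X) *\<^sub>v col M j" using col_mult2[OF MX M j] .
    also have "\<dots> = col M j" using cl[OF j] M X j by auto
    finally show "col (M * X * M) j = col M j" .
  qed (use M X in auto)
  have F1: "X\<^sup>T * M = M * X"
    using P transpose_mult[OF M X] S by simp
  have F2: "M * (X\<^sup>T * M) = M"
  proof -
    have "(M * X * M)\<^sup>T = M\<^sup>T * (M * X)\<^sup>T" using transpose_mult[OF MX M] .
    also have "\<dots> = M * (X\<^sup>T * M)" using S F1 P by simp
    finally show ?thesis using MXM S by simp
  qed
  define Z where "Z = X\<^sup>T * M * X"
  have Z: "Z \<in> carrier_mat n n" unfolding Z_def using X M by auto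
  have MZ: "M * Z = M * X"
  proof -
    have "M * Z = M * (X\<^sup>T * M) * X" unfolding Z_def using as[OF M XTM X] by simp
    thus ?thesis using F2 by simp
  qed
  have ZM: "Z * M = M * X"
  proof -
    have "Z * M = (X\<^sup>T * M) * (X * M)" unfolding Z_def using as[OF XTM X M] .
    also have "\<dots> = X\<^sup>T * (M * (X * M))" using as[OF XT M XM] .
    also have "M * (X * M) = M" using as[OF M X M] MXM by simp
    finally show ?thesis using F1 by simp
  qed
  show ?thesis unfolding mp4_def
  proof (rule exI[of _ Z], intro conjI)
    show "Z \<in> carrier_mat (dim_col M) (dim_row M)" using Z M by auto
    show "M * Z * M = M" using MZ MXM by simp
    show "(M * Z)\<^sup>T = M * Z" using MZ P by simp
    show "(Z * M)\<^sup>T = Z * M" using ZM P by simp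
    have "Z * M * Z = Z * (M * Z)" using as[OF Z M Z] .
    also have "\<dots> = Z * (M * X)" unfolding MZ ..
    also have "\<dots> = (Z * M) * X" using as[OF Z M X] by simp
    also have "\<dots> = M * X * X" unfolding ZM ..
    also have "\<dots> = X\<^sup>T * M * X" using F1 by simp
    finally show "Z * M * Z = Z" unfolding Z_def .
  qed
qed

lemma pinv_sym:
  fixes M :: "real mat" assumes M: "M \<in> carrier_mat n n" and S: "M\<^sup>T = M"
  shows "pinv M \<in> carrier_mat n n" "M * pinv M * M = M" "pinv M * M * pinv M = pinv M" "(pinv M)\<^sup>T = pinv M"
proof -
  have mp: "mp4 M (pinv M)" using pinv_mp4[OF M mp4_exists_sym[OF M S]] .
  then show Xc: "pinv M \<in> carrier_mat n n" "M * pinv M * M = M" "pinv M * M * pinv M = pinv M"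
    unfolding mp4_def using M by auto
  let ?X = "pinv M"
  have t3: "(M * ?X)\<^sup>T = M * ?X" and t4: "(?X * M)\<^sup>T = ?X * M" using mp unfolding mp4_def by auto
  have XT: "?X\<^sup>T \<in> carrier_mat n n" using Xc by auto
  have a: "M * ?X\<^sup>T = ?X * M" using t4 transpose_mult[OF Xc(1) M] S by simp
  have b: "?X\<^sup>T * M = M * ?X" using t3 transpose_mult[OF M Xc(1)] S by simp
  have "mp4 M ((pinv M)\<^sup>T)" unfolding mp4_def
  proof (intro conjI)
    show "?X\<^sup>T \<in> carrier_mat (dim_col M) (dim_row M)" using Xc M by auto
    show "(M * ?X\<^sup>T)\<^sup>T = M * ?X\<^sup>T" using a t4 by simp
    show "(?X\<^sup>T * M)\<^sup>T = ?X\<^sup>T * M" using b t3 by simp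
    show "M * ?X\<^sup>T * M = M" using tr3[OF M Xc(1) M] Xc(2) S assoc_mult_mat[OF M XT M] by simp
    show "?X\<^sup>T * M * ?X\<^sup>T = ?X\<^sup>T" using tr3[OF Xc(1) M Xc(1)] Xc(3) S assoc_mult_mat[OF XT M XT] by simp
  qed
  then show "(pinv M)\<^sup>T = pinv M" using mp4_unique[OF M] mp by blast
qed



lemma Wmat_carrier: "Wmat U n N ps i \<in> carrier_mat N (n i)"
  unfolding Wmat_def by auto

lemma sym_WAW: fixes A W :: "real mat"
  assumes A: "A \<in> carrier_mat N N" "A\<^sup>T = A" and W: "W \<in> carrier_mat N m"
  shows "W\<^sup>T * A * W \<in> carrier_mat m m" "(W\<^sup>T * A * W)\<^sup>T = W\<^sup>T * A * W"
proof -
  show "W\<^sup>T * A * W \<in> carrier_mat m m" using A W by auto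
  have "(W\<^sup>T * A * W)\<^sup>T = W\<^sup>T * (W\<^sup>T * A)\<^sup>T" using transpose_mult[of "W\<^sup>T * A" m N W m] A W by auto
  also have "(W\<^sup>T * A)\<^sup>T = A\<^sup>T * W" using transpose_mult[of "W\<^sup>T" m N A N] A W by auto
  also have "W\<^sup>T * (A\<^sup>T * W) = W\<^sup>T * A * W" using A W by (simp add: assoc_mult_mat[of _ m N _ N _ m])
  finally show "(W\<^sup>T * A * W)\<^sup>T = W\<^sup>T * A * W" .
qed

lemma is_param_update: assumes "is_param L n ps" "i < L" "q \<in> carrier_vec (n i)"
  shows "is_param L n (ps[i := q])"
  using assms unfolding is_param_def by (auto simp: nth_list_update)

lemma als_update_param:
  assumes A: "A \<in> carrier_mat N N" "A\<^sup>T = A" and b: "b \<in> carrier_vec N"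
    and ps: "is_param L n ps" and i: "i < L"
  shows "is_param L n (als_update U n N A b ps i)"
proof -
  let ?W = "Wmat U n N ps i"
  have W: "?W \<in> carrier_mat N (n i)" by (rule Wmat_carrier)
  note s = sym_WAW[OF A W]
  have "pinv (?W\<^sup>T * A * ?W) \<in> carrier_mat (n i) (n i)" using pinv_sym(1)[OF s] .
  then have "pinv (?W\<^sup>T * A * ?W) *\<^sub>v (?W\<^sup>T *\<^sub>v b) \<in> carrier_vec (n i)" using W b by auto
  then show ?thesis unfolding als_update_def Let_def using is_param_update[OF ps i] by auto
qed

lemma partial_sweep_param:
  assumes A: "A \<in> carrier_mat N N" "A\<^sup>T = A" and b: "b \<in> carrier_vec N"
    and ps: "is_param L n ps"
  shows "m \<le> L \<Longrightarrow> is_param L n (partial_sweep U n N A b ps m)"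
  by (induction m) (use ps als_update_param[OF A b] in auto)

lemma als_param_param:
  assumes A: "A \<in> carrier_mat N N" "A\<^sup>T = A" and b: "b \<in> carrier_vec N"
    and ps: "is_param L n p1"
  shows "is_param L n (als_param L U n N A b p1 k)"
proof -
  have "is_param L n (((\<lambda>ps. partial_sweep U n N A b ps L) ^^ j) p1)" for j
    by (induction j) (use ps partial_sweep_param[OF A b] in auto)
  then show ?thesis unfolding als_param_def by blast
qed

lemma U_linear:
  assumes mlin: "multilinear_map L n N U" and ps: "is_param L n ps" and i: "i < L"
    and q: "q \<in> carrier_vec (n i)"
  shows "U (ps[i := q]) = Wmat U n N ps i *\<^sub>v q"
proof -
  have Uc: "\<And>ps. is_param L n ps \<Longrightarrow> U ps \<in> carrier_vec N" using mlin unfolding multilinear_map_def by auto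
  have lin: "\<And>x y a. x \<in> carrier_vec (n i) \<Longrightarrow> y \<in> carrier_vec (n i) \<Longrightarrow>
        U (ps[i := a \<cdot>\<^sub>v x + y]) = a \<cdot>\<^sub>v U (ps[i := x]) + U (ps[i := y])"
    using mlin ps i unfolding multilinear_map_def by blast
  have Uci: "\<And>x. x \<in> carrier_vec (n i) \<Longrightarrow> U (ps[i := x]) \<in> carrier_vec N"
    using Uc is_param_update[OF ps i] by blast
  define s where "s m = vec (n i) (\<lambda>j. if j < m then q$j else 0)" for m
  have z: "U (ps[i := 0\<^sub>v (n i)]) = 0\<^sub>v N"
  proof -
    have e: "(-1) \<cdot>\<^sub>v 0\<^sub>v (n i) + 0\<^sub>v (n i) = (0\<^sub>v (n i) :: real vec)" by (intro eq_vecI) auto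
    have "U (ps[i := 0\<^sub>v (n i)]) = (-1) \<cdot>\<^sub>v U (ps[i := 0\<^sub>v (n i)]) + U (ps[i := 0\<^sub>v (n i)])"
      using lin[of "0\<^sub>v (n i)" "0\<^sub>v (n i)" "-1"] e by simp
    moreover have zc: "U (ps[i := 0\<^sub>v (n i)]) \<in> carrier_vec N" using Uci[of "0\<^sub>v (n i)"] by simp
    ultimately show ?thesis
    proof (intro eq_vecI)
      fix r assume h: "U (ps[i := 0\<^sub>v (n i)]) = - 1 \<cdot>\<^sub>v U (ps[i := 0\<^sub>v (n i)]) + U (ps[i := 0\<^sub>v (n i)])"
        and r: "r < dim_vec (0\<^sub>v N :: real vec)"
      have "U (ps[i := 0\<^sub>v (n i)]) $ r = (- 1 \<cdot>\<^sub>v U (ps[i := 0\<^sub>v (n i)]) + U (ps[i := 0\<^sub>v (n i)])) $ r"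
        using h by simp
      then show "U (ps[i := 0\<^sub>v (n i)]) $ r = 0\<^sub>v N $ r" using r zc by simp
    qed (use zc in auto)
  qed
  have main: "m \<le> n i \<Longrightarrow> U (ps[i := s m]) = vec N (\<lambda>r. \<Sum>c<m. Wmat U n N ps i $$ (r,c) * q$c)" for m
  proof (induction m)
    case 0
    have "s 0 = 0\<^sub>v (n i)" unfolding s_def by (intro eq_vecI) auto
    then show ?case using z by (intro eq_vecI) auto
  next
    case (Suc m)
    then have m: "m < n i" by auto
    have sS: "s (Suc m) = q$m \<cdot>\<^sub>v unit_vec (n i) m + s m" unfolding s_def
      by (intro eq_vecI) (auto simp: unit_vec_def less_Suc_eq)
    have sc: "s m \<in> carrier_vec (n i)" unfolding s_def by auto
    have "U (ps[i := s (Suc m)]) = q$m \<cdot>\<^sub>v U (ps[i := unit_vec (n i) m]) + U (ps[i := s m])"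
      unfolding sS by (rule lin) (use sc in auto)
    also have "\<dots> = vec N (\<lambda>r. \<Sum>c<Suc m. Wmat U n N ps i $$ (r,c) * q$c)"
      unfolding Suc.IH[OF less_imp_le[OF m]]
      using Uci[of "unit_vec (n i) m"] m by (intro eq_vecI) (auto simp: Wmat_def)
    finally show ?case .
  qed
  have "s (n i) = q" unfolding s_def using q by (intro eq_vecI) auto
  then have "U (ps[i := q]) = vec N (\<lambda>r. \<Sum>c<n i. Wmat U n N ps i $$ (r,c) * q$c)" using main[of "n i"] by simp
  also have "\<dots> = Wmat U n N ps i *\<^sub>v q"
    using q Wmat_carrier[of U n N ps i]
    by (intro eq_vecI) (auto simp: mult_mat_vec_def scalar_prod_def atLeast0LessThan mult.commute intro!: sum.cong)
  finally show ?thesis .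
qed



lemma key:
  assumes A: "A \<in> carrier_mat N N" "A\<^sup>T = A" and b: "b \<in> carrier_vec N"
    and mlin: "multilinear_map L n N U" and ps: "is_param L n ps" and i: "i < L"
  defines "v \<equiv> U (als_update U n N A b ps i)"
  shows "v \<in> carrier_vec N \<and> (A *\<^sub>v v) \<bullet> v = v \<bullet> b"
proof -
  define W where "W = Wmat U n N ps i"
  have W: "W \<in> carrier_mat N (n i)" unfolding W_def by (rule Wmat_carrier)
  define M where "M = W\<^sup>T * A * W"
  note s = sym_WAW[OF A W, folded M_def]
  define Z where "Z = pinv M"
  note Zp = pinv_sym[OF s, folded Z_def]
  define y where "y = W\<^sup>T *\<^sub>v b"
  have y: "y \<in> carrier_vec (n i)" unfolding y_def using W b by auto
  define q where "q = Z *\<^sub>v y"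
  have q: "q \<in> carrier_vec (n i)" unfolding q_def using Zp(1) y by auto
  have vdef: "v = U (ps[i := q])" unfolding v_def als_update_def Let_def q_def Z_def M_def y_def W_def ..
  have vW: "v = W *\<^sub>v q" unfolding vdef W_def by (rule U_linear[OF mlin ps i q])
  have vc: "v \<in> carrier_vec N" unfolding vW using W q by auto
  have e1: "v \<bullet> b = y \<bullet> (Z *\<^sub>v y)"
  proof -
    have "v \<bullet> b = b \<bullet> v" using comm_scalar_prod[OF vc b] .
    also have "\<dots> = (W\<^sup>T *\<^sub>v b) \<bullet> q" unfolding vW using transpose_vec_mult_scalar[OF W q b] by simp
    finally show ?thesis unfolding y_def q_def .
  qed
  have e2: "(A *\<^sub>v v) \<bullet> v = y \<bullet> (Z *\<^sub>v y)"
  proof -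
    have AWq: "A *\<^sub>v (W *\<^sub>v q) \<in> carrier_vec N" using A W q by auto
    have "(A *\<^sub>v v) \<bullet> v = (W\<^sup>T *\<^sub>v (A *\<^sub>v (W *\<^sub>v q))) \<bullet> q"
      unfolding vW using transpose_vec_mult_scalar[OF W q AWq] by simp
    also have "W\<^sup>T *\<^sub>v (A *\<^sub>v (W *\<^sub>v q)) = M *\<^sub>v q" unfolding M_def using A W q
      by (simp add: assoc_mult_mat_vec[of "W\<^sup>T" "n i" N "A*W" "n i" q] assoc_mult_mat_vec[of A N N W "n i" q])
    also have "(M *\<^sub>v q) \<bullet> q = (Z\<^sup>T *\<^sub>v (M *\<^sub>v q)) \<bullet> y"
      unfolding q_def using transpose_vec_mult_scalar[OF Zp(1) y, of "M *\<^sub>v (Z *\<^sub>v y)"] s(1) Zp(1) y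
      by auto
    also have "Z\<^sup>T *\<^sub>v (M *\<^sub>v q) = (Z * M * Z) *\<^sub>v y" unfolding q_def Zp(4) using Zp(1) s(1) y
      by (simp add: assoc_mult_mat_vec[of Z "n i" "n i" "M*Z" "n i" y] assoc_mult_mat_vec[of M "n i" "n i" Z "n i" y])
    also have "\<dots> = Z *\<^sub>v y" using Zp(3) by simp
    also have "(Z *\<^sub>v y) \<bullet> y = y \<bullet> (Z *\<^sub>v y)" by (rule comm_scalar_prod[of _ "n i"]) (use Zp(1) y in auto)
    finally show ?thesis .
  qed
  show ?thesis using vc e1 e2 by simp
qed

theorem mainTheorem9:
  fixes d L N :: nat and m n :: "nat \<Rightarrow> nat"
    and A :: "real mat" and b :: "real vec"
    and U :: "real vec list \<Rightarrow> real vec" and p1 :: "real vec list"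
  assumes "N = (\<Prod>\<nu>\<in>{1..d}. m \<nu>)"
    and "L \<ge> d"
    and "A \<in> carrier_mat N N" and "transpose_mat A = A"
    and "\<forall>v \<in> carrier_vec N. v \<noteq> 0\<^sub>v N \<longrightarrow> (A *\<^sub>v v) \<bullet> v > 0"
    and "b \<in> carrier_vec N" and "b \<noteq> 0\<^sub>v N"
    and "multilinear_map L n N U"
    and "is_param L n p1"
  shows "\<forall>k \<ge> 1. \<forall>\<mu> \<in> {1..L}.
           (let v = als_iterate L U n N A b p1 k \<mu> in
              energy A b v = - (1 / (2 * (b \<bullet> b))) * (v \<bullet> b) \<and>
              - (1 / (2 * (b \<bullet> b))) * (v \<bullet> b) = - (1 / (2 * (b \<bullet> b))) * (A_norm A v)\<^sup>2)"
proof (intro allI impI ballI)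
  fix k :: nat and \<mu> assume k: "1 \<le> k" and mu: "\<mu> \<in> {1..L}"
  note A = assms(3,4) and b = assms(6) and mlin = assms(8) and pd = assms(5)
  define ps where "ps = partial_sweep U n N A b (als_param L U n N A b p1 k) (\<mu> - 1)"
  have ps: "is_param L n ps" unfolding ps_def
    by (rule partial_sweep_param[OF A b als_param_param[OF A b assms(9)]]) (use mu in auto)
  have i: "\<mu> - 1 < L" using mu by auto
  have vdef: "als_iterate L U n N A b p1 k \<mu> = U (als_update U n N A b ps (\<mu> - 1))"
  proof -
    have "\<mu> = Suc (\<mu> - 1)" using mu by auto
    then show ?thesis unfolding als_iterate_def ps_def by (metis partial_sweep.simps(2))
  qed
  define v where "v = als_iterate L U n N A b p1 k \<mu>"
  from key[OF A b mlin ps i] have vc: "v \<in> carrier_vec N" and e: "(A *\<^sub>v v) \<bullet> v = v \<bullet> b"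
    unfolding v_def vdef by auto
  have nn: "(A *\<^sub>v v) \<bullet> v \<ge> 0"
  proof (cases "v = 0\<^sub>v N")
    case True then show ?thesis using A by simp
  next
    case False then show ?thesis using pd vc by (simp add: less_imp_le)
  qed
  have bv: "b \<bullet> v = v \<bullet> b" using comm_scalar_prod[OF b vc] .
  have "energy A b v = - (1 / (2 * (b \<bullet> b))) * (v \<bullet> b)"
    unfolding energy_def e bv by (simp add: field_simps)
  moreover have "(A_norm A v)\<^sup>2 = v \<bullet> b" unfolding A_norm_def using nn e by simp
  ultimately show "let v = als_iterate L U n N A b p1 k \<mu> in
              energy A b v = - (1 / (2 * (b \<bullet> b))) * (v \<bullet> b) \<and>
              - (1 / (2 * (b \<bullet> b))) * (v \<bullet> b) = - (1 / (2 * (b \<bullet> b))) * (A_norm A v)\<^sup>2"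
    unfolding v_def Let_def by simp
qed


end
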